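(* Let $P$ be a stochastic matrix over a countable set $\Omega$, let $C\subseteq\Omega$ and let $p=\sum_{i\in C}p_i\in\ell^\infty(\Omega)$. Then $p$ is reducing for $Arv(P)$ if and only if for every path $\gamma:\{0,\dots,\ell\}\to\Omega$ in the directed graph of $P$ with $\gamma(0),\gamma(\ell)\in C$ one has $\gamma(k)\in C$ for all $0\le k\le\ell$.
   Context: A stochastic matrix has nonnegative entries and row sums $1$; $P^{(n)}_{ij}$ is the $(i,j)$ entry of $P^n$; $p_i$ is the indicator of $\{i\}$. A path in $P$ is $\gamma:\{0,\dots,\ell\}\to\Omega$ with $P_{\gamma(k)\gamma(k+1)}>0$ for $0\le k\le\ell-1$. $Arv(P)$: $Arv(P)_0=\ell^\infty(\Omega)$; $Arv(P)_n$ ($n\ge1$) is the set of complex $\Omega\times\Omega$ matrices $A=[a_{ij}]$ with $a_{ij}=0$ whenever $P^{(n)}_{ij}=0$ and $\sup_j\sum_i|a_{ij}|^2<\infty$, a W*-correspondence over $\ell^\infty(\Omega)$ with actions by diagonal matrices and inner product $\mathrm{Diag}(A^*B)$; $U_{n,m}(A\otimes B)=(\sqrt{P^{n+m}})^{\flat}*[(\sqrt{P^n}*A)(\sqrt{P^m}*B)]$ for $n,m\ge1$ ($*$ entrywise product, $\sqrt\cdot$ entrywise, $M^\flat_{ik}=M_{ik}^{-1}$ if $M_{ik}>0$, else $0$), $U_{0,n},U_{n,0}$ module actions. A projection $p\in\ell^\infty(\Omega)$ is reducing for $Arv(P)$ if $U_{n,m}^*(p\,Arv(P)_{n+m}\,p)\subseteq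 p\,Arv(P)_n\,p\otimes p\,Arv(P)_m\,p$ for all $n,m$. *)

theory Defs
  imports "HOL-Analysis.Analysis"
begin

definition stochastic :: "('a::countable \<Rightarrow> 'a \<Rightarrow> real) \<Rightarrow> bool" where
  "stochastic P \<longleftrightarrow> (\<forall>i j. 0 \<le> P i j) \<and> (\<forall>i. ((\<lambda>j. P i j) has_sum 1) UNIV)"

fun matpow :: "('a::countable \<Rightarrow> 'a \<Rightarrow> real) \<Rightarrow> nat \<Rightarrow> 'a \<Rightarrow> 'a \<Rightarrow> real" where
  "matpow P 0 = (\<lambda>i j. if i = j then 1 else 0)"
| "matpow P (Suc n) = (\<lambda>i j. \<Sum>\<^sub>\<infinity>k. matpow P n i k * P k j)"

definition is_path :: "('a \<Rightarrow> 'a \<Rightarrow> real) \<Rightarrow> (nat \<Rightarrow> 'a) \<Rightarrow> nat \<Rightarrow> bool" where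
  "is_path P \<gamma> l \<longleftrightarrow> (\<forall>k<l. P (\<gamma> k) (\<gamma> (Suc k)) > 0)"

definition supp :: "('a::countable \<Rightarrow> 'a \<Rightarrow> real) \<Rightarrow> nat \<Rightarrow> ('a \<times> 'a) set" where
  "supp P n = {(i, j). matpow P n i j > 0}"

text \<open>Column-bounded matrices supported in S. With S = supp P n this is Arv(P)_n;
  for n = 0 (P^(0) = I) it is the set of bounded diagonal matrices, i.e. l^infty(Omega).\<close>
definition colmat :: "('a \<times> 'a) set \<Rightarrow> ('a \<Rightarrow> 'a \<Rightarrow> complex) set" where
  "colmat S = {A. (\<forall>i j. (i, j) \<notin> S \<longrightarrow> A i j = 0)
       \<and> (\<forall>j. (\<lambda>i. (cmod (A i j))\<^sup>2) summable_on UNIV)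
       \<and> (\<exists>M. \<forall>j. (\<Sum>\<^sub>\<infinity>i. (cmod (A i j))\<^sup>2) \<le> M)}"

definition Arv :: "('a::countable \<Rightarrow> 'a \<Rightarrow> real) \<Rightarrow> nat \<Rightarrow> ('a \<Rightarrow> 'a \<Rightarrow> complex) set" where
  "Arv P n = colmat (supp P n)"

text \<open>Diagonal-valued inner product Diag(A^* B), j-th diagonal entry.\<close>
definition arv_inner :: "('a \<Rightarrow> 'a \<Rightarrow> complex) \<Rightarrow> ('a \<Rightarrow> 'a \<Rightarrow> complex) \<Rightarrow> 'a \<Rightarrow> complex" where
  "arv_inner A B j = (\<Sum>\<^sub>\<infinity>i. cnj (A i j) * B i j)"

text \<open>Concrete model of the (self-dual) interior tensor product E \<otimes> F over l^infty(Omega)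
  of the correspondences E = colmat S1, F = colmat S2: the elementary tensor A \<otimes> B is
  the array (i,k,j) \<mapsto> A i k * B k j, and the l^infty-valued inner product is
  <A\<otimes>B, A'\<otimes>B'>_j = sum over (i,k) of conj(A i k B k j) A' i k B' k j.\<close>
definition ten_model :: "('a \<times> 'a) set \<Rightarrow> ('a \<times> 'a) set \<Rightarrow> ('a \<Rightarrow> 'a \<Rightarrow> 'a \<Rightarrow> complex) set" where
  "ten_model S1 S2 = {T. (\<forall>i k j. ((i, k) \<notin> S1 \<or> (k, j) \<notin> S2) \<longrightarrow> T i k j = 0)
       \<and> (\<forall>j. (\<lambda>(i, k). (cmod (T i k j))\<^sup>2) summable_on UNIV)
       \<and> (\<exists>M. \<forall>j. (\<Sum>\<^sub>\<infinity>(i, k). (cmod (T i k j))\<^sup>2) \<le> M)}"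

definition elem_tensor :: "('a \<Rightarrow> 'a \<Rightarrow> complex) \<Rightarrow> ('a \<Rightarrow> 'a \<Rightarrow> complex) \<Rightarrow> 'a \<Rightarrow> 'a \<Rightarrow> 'a \<Rightarrow> complex" where
  "elem_tensor A B = (\<lambda>i k j. A i k * B k j)"

definition ten_inner :: "('a \<Rightarrow> 'a \<Rightarrow> 'a \<Rightarrow> complex) \<Rightarrow> ('a \<Rightarrow> 'a \<Rightarrow> 'a \<Rightarrow> complex) \<Rightarrow> 'a \<Rightarrow> complex" where
  "ten_inner S T j = (\<Sum>\<^sub>\<infinity>(i, k). cnj (S i k j) * T i k j)"

text \<open>The map U_{n,m}: (sqrt P^(n+m))^flat * [(sqrt P^(n) * A)(sqrt P^(m) * B)], extended
  from elementary tensors A \<otimes> B to the whole tensor model.\<close>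
definition Umap :: "('a::countable \<Rightarrow> 'a \<Rightarrow> real) \<Rightarrow> nat \<Rightarrow> nat \<Rightarrow> ('a \<Rightarrow> 'a \<Rightarrow> 'a \<Rightarrow> complex) \<Rightarrow> 'a \<Rightarrow> 'a \<Rightarrow> complex" where
  "Umap P n m T = (\<lambda>i j. (if matpow P (n + m) i j > 0
       then complex_of_real (1 / sqrt (matpow P (n + m) i j)) else 0) *
       (\<Sum>\<^sub>\<infinity>k. complex_of_real (sqrt (matpow P n i k)) * complex_of_real (sqrt (matpow P m k j)) * T i k j))"

definition proj :: "'a set \<Rightarrow> 'a \<Rightarrow> complex" where
  "proj C i = (if i \<in> C then 1 else 0)"

definition compress :: "'a set \<Rightarrow> ('a \<Rightarrow> 'a \<Rightarrow> complex) set \<Rightarrow> ('a \<Rightarrow> 'a \<Rightarrow> complex) set" where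
  "compress C X = {(\<lambda>i j. proj C i * A i j * proj C j) | A. A \<in> X}"

definition csupp :: "('a::countable \<Rightarrow> 'a \<Rightarrow> real) \<Rightarrow> 'a set \<Rightarrow> nat \<Rightarrow> ('a \<times> 'a) set" where
  "csupp P C n = {(i, j). (i, j) \<in> supp P n \<and> i \<in> C \<and> j \<in> C}"

definition is_Uadj :: "('a::countable \<Rightarrow> 'a \<Rightarrow> real) \<Rightarrow> nat \<Rightarrow> nat \<Rightarrow> ('a \<Rightarrow> 'a \<Rightarrow> complex) \<Rightarrow> ('a \<Rightarrow> 'a \<Rightarrow> 'a \<Rightarrow> complex) \<Rightarrow> bool" where
  "is_Uadj P n m A T \<longleftrightarrow> T \<in> ten_model (supp P n) (supp P m) \<and>
     (\<forall>S \<in> ten_model (supp P n) (supp P m). \<forall>j. arv_inner (Umap P n m S) A j = ten_inner S T j)"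

text \<open>p is reducing: U_{n,m}^*(p Arv_{n+m} p) \<subseteq> p Arv_n p \<otimes> p Arv_m p for all n, m.\<close>
definition reducing :: "('a::countable \<Rightarrow> 'a \<Rightarrow> real) \<Rightarrow> 'a set \<Rightarrow> bool" where
  "reducing P C \<longleftrightarrow> (\<forall>n m. \<forall>A \<in> compress C (Arv P (n + m)).
       \<exists>T. is_Uadj P n m A T \<and> T \<in> ten_model (csupp P C n) (csupp P C m))"

end

theory Submission imports Defs begin
lemma has_sum_single_pt:
  fixes f :: "'b \<Rightarrow> 'c::{topological_comm_monoid_add,t2_space}"
  assumes "\<And>x. x \<noteq> a \<Longrightarrow> f x = 0"
  shows "(f has_sum f a) UNIV"
  by (rule has_sum_finite_neutralI[of "{a}"]) (use assms in auto)

lemma infsum_single_pt: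
  fixes f :: "'b \<Rightarrow> 'c::{topological_comm_monoid_add,t2_space}"
  assumes "\<And>x. x \<noteq> a \<Longrightarrow> f x = 0"
  shows "infsum f UNIV = f a"
  by (rule infsumI[OF has_sum_single_pt[OF assms]])

lemma le_has_sum:
  fixes f :: "'b \<Rightarrow> real"
  assumes "(f has_sum s) UNIV" "\<And>x. f x \<ge> 0"
  shows "f a \<le> s"
proof -
  have "(f has_sum f a) {a}" by (rule has_sum_finiteI) auto
  from has_sum_mono2[OF this assms(1)] assms(2) show ?thesis by simp
qed

lemma fubini_nonneg:
  fixes f :: "'b \<times> 'c \<Rightarrow> real"
  assumes nn: "\<And>x. f x \<ge> 0"
    and inner: "\<And>k. ((\<lambda>j. f (k, j)) has_sum g k) UNIV"
    and outer: "(g has_sum s) UNIV"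
  shows "((\<lambda>j. \<Sum>\<^sub>\<infinity>k. f (k, j)) has_sum s) UNIV"
    and "\<And>j. (\<lambda>k. f (k, j)) summable_on UNIV"
proof -
  have gs: "g summable_on UNIV" using outer by (simp add: summable_on_def, blast)
  have sm: "f summable_on Sigma UNIV (\<lambda>_. UNIV)"
    by (rule summable_on_SigmaI[OF inner gs nn])
  have hs: "(f has_sum s) (Sigma UNIV (\<lambda>_. UNIV))"
    by (rule has_sum_SigmaI[OF inner outer sm])
  have hs2: "((\<lambda>(j,k). f (k, j)) has_sum s) (UNIV \<times> UNIV)"
    using has_sum_swap[THEN iffD1, of f UNIV UNIV s] hs by simp
  then have sm2: "(\<lambda>(j,k). f (k, j)) summable_on Sigma UNIV (\<lambda>_. UNIV)"
    unfolding summable_on_def by blast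
  show col: "\<And>j. (\<lambda>k. f (k, j)) summable_on UNIV"
    by (rule summable_on_SigmaD1[of "\<lambda>j k. f (k, j)", OF sm2 UNIV_I])
  show "((\<lambda>j. \<Sum>\<^sub>\<infinity>k. f (k, j)) has_sum s) UNIV"
    by (rule has_sum_SigmaD[where f="\<lambda>(j,k). f (k, j)" and S=s and A=UNIV and B="\<lambda>_. UNIV"])
       (use hs2 col in auto)
qed

context
  fixes P :: "'a::countable \<Rightarrow> 'a \<Rightarrow> real"
  assumes st: "stochastic P"
begin

lemma P_nn: "0 \<le> P i j" using st unfolding stochastic_def by blast

lemma P_row: "((\<lambda>j. P i j) has_sum 1) UNIV" using st unfolding stochastic_def by blast

lemma mp_nn_row: "(\<forall>i j. 0 \<le> matpow P n i j) \<and> (\<forall>i. ((\<lambda>j. matpow P n i j) has_sum 1) UNIV)"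
proof (induction n)
  case 0
  have "((\<lambda>j. matpow P 0 i j) has_sum 1) UNIV" for i
    using has_sum_single_pt[where f="\<lambda>j. matpow P 0 i j" and a=i] by simp
  then show ?case by simp
next
  case (Suc n)
  have nn: "0 \<le> matpow P (Suc n) i j" for i j
    using Suc P_nn by (simp add: infsum_nonneg)
  have "((\<lambda>j. \<Sum>\<^sub>\<infinity>k. (\<lambda>(k,j). matpow P n i k * P k j) (k, j)) has_sum 1) UNIV" for i
  proof (rule fubini_nonneg(1))
    show "0 \<le> (\<lambda>(k,j). matpow P n i k * P k j) x" for x
      using Suc P_nn by (auto simp: case_prod_beta)
    show "((\<lambda>j. (\<lambda>(k,j). matpow P n i k * P k j) (k, j)) has_sum matpow P n i k * 1) UNIV" for k
      using has_sum_cmult_right[OF P_row[of k], where c="matpow P n i k"] by simp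
    show "((\<lambda>k. matpow P n i k * 1) has_sum 1) UNIV" using Suc by simp
  qed
  then show ?case using nn by simp
qed

lemma mp_nn: "0 \<le> matpow P n i j" using mp_nn_row by blast
lemma mp_row: "((\<lambda>j. matpow P n i j) has_sum 1) UNIV" using mp_nn_row by blast
lemma mp_le1: "matpow P n i j \<le> 1" using le_has_sum[OF mp_row mp_nn] .
lemma mp_row_summable: "(\<lambda>j. matpow P n i j) summable_on UNIV"
  using mp_row unfolding summable_on_def by blast

lemma mp_prod_summable: "(\<lambda>k. matpow P n i k * matpow P m k j) summable_on UNIV"
proof (rule summable_on_comparison_test[OF mp_row_summable])
  show "matpow P n i k * matpow P m k j \<le> matpow P n i k" for k
    using mp_nn mp_le1 by (simp add: mult_left_le)
  show "0 \<le> matpow P n i k * matpow P m k j" for k using mp_nn by simp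
qed

lemma P_le1: "P i j \<le> 1" using le_has_sum[OF P_row P_nn] .

lemma mp1[simp]: "matpow P (Suc 0) i j = P i j"
proof -
  have "(\<Sum>\<^sub>\<infinity>k. matpow P 0 i k * P k j) = matpow P 0 i i * P i j"
    by (rule infsum_single_pt) simp
  then show ?thesis by simp
qed

lemma mp1': "matpow P 1 i j = P i j" using mp1 by (simp only: One_nat_def)

lemma CK: "matpow P (n + m) i j = (\<Sum>\<^sub>\<infinity>k. matpow P n i k * matpow P m k j)"
proof (induction m arbitrary: j)
  case 0
  have "(\<Sum>\<^sub>\<infinity>k. matpow P n i k * matpow P 0 k j) = matpow P n i j * matpow P 0 j j"
    by (rule infsum_single_pt) simp
  then show ?case by simp
next
  case (Suc m)
  define F where "F = (\<lambda>k l. matpow P n i k * matpow P m k l * P l j)"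
  have Fnn: "0 \<le> F k l" for k l unfolding F_def using mp_nn P_nn by simp
  have inner: "((\<lambda>l. F k l) has_sum matpow P n i k * matpow P (Suc m) k j) UNIV" for k
  proof -
    have s1: "(\<lambda>l. matpow P m k l * P l j) summable_on UNIV"
    proof (rule summable_on_comparison_test[OF mp_row_summable])
      show "matpow P m k l * P l j \<le> matpow P m k l" for l
        using mp_nn P_nn P_le1[of l j] by (simp add: mult_left_le)
      show "0 \<le> matpow P m k l * P l j" for l using mp_nn P_nn by simp
    qed
    have "((\<lambda>l. matpow P n i k * (matpow P m k l * P l j)) has_sum
             matpow P n i k * matpow P (Suc m) k j) UNIV"
      using has_sum_cmult_right[OF s1[THEN has_sum_infsum], where c="matpow P n i k"] by simp
    then show ?thesis unfolding F_def by (simp add: mult.assoc)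
  qed
  have hsum: "(\<lambda>k. matpow P n i k * matpow P (Suc m) k j) summable_on UNIV"
    by (rule mp_prod_summable)
  have sm: "(\<lambda>(k,l). F k l) summable_on Sigma UNIV (\<lambda>_. UNIV)"
    by (rule summable_on_SigmaI[where g="\<lambda>k. matpow P n i k * matpow P (Suc m) k j"])
       (use inner hsum Fnn in auto)
  then have sm2: "(\<lambda>(l,k). F k l) summable_on UNIV \<times> UNIV"
    using summable_on_swap[THEN iffD1, of "\<lambda>(k,l). F k l" UNIV UNIV] by simp
  have "matpow P (n + Suc m) i j = (\<Sum>\<^sub>\<infinity>l. matpow P (n + m) i l * P l j)" by simp
  also have "\<dots> = (\<Sum>\<^sub>\<infinity>l. \<Sum>\<^sub>\<infinity>k. F k l)"
    unfolding Suc F_def by (simp add: infsum_cmult_left')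
  also have "\<dots> = (\<Sum>\<^sub>\<infinity>k. \<Sum>\<^sub>\<infinity>l. F k l)"
    by (rule infsum_swap_banach) (use sm2 in simp)
  also have "\<dots> = (\<Sum>\<^sub>\<infinity>k. matpow P n i k * matpow P (Suc m) k j)"
    by (rule infsum_cong) (rule infsumI[OF inner])
  finally show ?case .
qed

lemma mp_le_term: "matpow P n i k * P k j \<le> matpow P (Suc n) i j"
proof -
  have "(\<lambda>k. matpow P n i k * matpow P 1 k j) summable_on UNIV" by (rule mp_prod_summable)
  then have sm: "(\<lambda>k. matpow P n i k * P k j) summable_on UNIV" by (simp only: mp1')
  have "((\<lambda>k. matpow P n i k * P k j) has_sum matpow P (Suc n) i j) UNIV"
    using sm[THEN has_sum_infsum] by simp
  from le_has_sum[OF this] show ?thesis using mp_nn P_nn by simp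
qed

lemma path_pos: "is_path P \<gamma> l \<Longrightarrow> matpow P l (\<gamma> 0) (\<gamma> l) > 0"
proof (induction l)
  case 0
  then show ?case by simp
next
  case (Suc l)
  then have "is_path P \<gamma> l" and p: "P (\<gamma> l) (\<gamma> (Suc l)) > 0" by (auto simp: is_path_def)
  with Suc have "matpow P l (\<gamma> 0) (\<gamma> l) > 0" by blast
  with p have "0 < matpow P l (\<gamma> 0) (\<gamma> l) * P (\<gamma> l) (\<gamma> (Suc l))" by simp
  also have "\<dots> \<le> matpow P (Suc l) (\<gamma> 0) (\<gamma> (Suc l))" by (rule mp_le_term)
  finally show ?case .
qed

lemma pos_path: "matpow P n i j > 0 \<Longrightarrow> \<exists>\<gamma>. is_path P \<gamma> n \<and> \<gamma> 0 = i \<and> \<gamma> n = j"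
proof (induction n arbitrary: j)
  case 0
  then have "i = j" by (simp split: if_splits)
  then show ?case by (intro exI[of _ "\<lambda>_. i"]) (simp add: is_path_def)
next
  case (Suc n)
  have "\<exists>k. matpow P n i k * P k j \<noteq> 0"
  proof (rule ccontr)
    assume "\<not> ?thesis"
    then have "matpow P (Suc n) i j = 0" by (simp add: infsum_0)
    with Suc.prems show False by simp
  qed
  then obtain k where k: "matpow P n i k * P k j \<noteq> 0" by blast
  then have a: "matpow P n i k > 0" and b: "P k j > 0"
    using mp_nn[of n i k] P_nn[of k j] by (auto simp: less_le)
  from Suc.IH[OF a] obtain \<gamma> where g: "is_path P \<gamma> n" "\<gamma> 0 = i" "\<gamma> n = k" by blast
  show ?case
  proof (intro exI[of _ "\<gamma>(Suc n := j)"] conjI)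
    show "is_path P (\<gamma>(Suc n := j)) (Suc n)"
      using g b unfolding is_path_def by (auto simp: less_Suc_eq)
  qed (use g in auto)
qed

lemma path_trunc: "is_path P \<gamma> l \<Longrightarrow> k \<le> l \<Longrightarrow> is_path P \<gamma> k"
  unfolding is_path_def by auto

lemma path_shift: "is_path P \<gamma> l \<Longrightarrow> k \<le> l \<Longrightarrow> is_path P (\<lambda>t. \<gamma> (k + t)) (l - k)"
  unfolding is_path_def by auto

lemma path_concat:
  assumes "is_path P \<gamma>1 n" "is_path P \<gamma>2 m" "\<gamma>1 n = \<gamma>2 0"
  shows "is_path P (\<lambda>t. if t \<le> n then \<gamma>1 t else \<gamma>2 (t - n)) (n + m)"
  unfolding is_path_def
proof (intro allI impI)
  fix t assume t: "t < n + m"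
  show "0 < P (if t \<le> n then \<gamma>1 t else \<gamma>2 (t - n)) (if Suc t \<le> n then \<gamma>1 (Suc t) else \<gamma>2 (Suc t - n))"
  proof (cases "Suc t \<le> n")
    case True then show ?thesis using assms(1) by (simp add: is_path_def)
  next
    case False
    show ?thesis
    proof (cases "t = n")
      case True
      then show ?thesis using assms(2,3) t by (simp add: is_path_def)
    next
      case False
      with \<open>\<not> Suc t \<le> n\<close> have "n < t" by simp
      then have "Suc t - n = Suc (t - n)" "t - n < m" using t by auto
      then show ?thesis using assms(2) \<open>n < t\<close> by (simp add: is_path_def)
    qed
  qed
qed

lemma reducing_imp_path:
  assumes red: "reducing P C" and pa: "is_path P \<gamma> l" and c0: "\<gamma> 0 \<in> C" and cl: "\<gamma> l \<in> C"
    and kl: "k \<le> l"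
  shows "\<gamma> k \<in> C"
proof (rule ccontr)
  assume nk: "\<gamma> k \<notin> C"
  define i0 j0 k0 where "i0 = \<gamma> 0" and "j0 = \<gamma> l" and "k0 = \<gamma> k"
  define m where "m = l - k"
  have lkm: "k + m = l" using kl m_def by simp
  have a: "matpow P k i0 k0 > 0" unfolding i0_def k0_def using path_pos[OF path_trunc[OF pa kl]] .
  have b: "matpow P m k0 j0 > 0" unfolding m_def k0_def j0_def
    using path_pos[OF path_shift[OF pa kl]] kl by simp
  have Q: "matpow P (k + m) i0 j0 > 0" unfolding lkm i0_def j0_def using path_pos[OF pa] .
  define A :: "'a \<Rightarrow> 'a \<Rightarrow> complex" where "A = (\<lambda>i j. if i = i0 \<and> j = j0 then 1 else 0)"
  have A0: "A \<in> colmat (supp P (k + m))"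
    unfolding colmat_def
  proof (intro CollectI conjI allI impI)
    fix i j assume "(i, j) \<notin> supp P (k + m)"
    then show "A i j = 0" using Q unfolding A_def supp_def by auto
  next
    fix j
    show "(\<lambda>i. (cmod (A i j))\<^sup>2) summable_on UNIV"
      unfolding summable_on_def by (rule exI, rule has_sum_single_pt[where a=i0]) (auto simp: A_def split: if_splits)
  next
    show "\<exists>M. \<forall>j. (\<Sum>\<^sub>\<infinity>i. (cmod (A i j))\<^sup>2) \<le> M"
    proof (intro exI allI)
      fix j
      have "(\<Sum>\<^sub>\<infinity>i. (cmod (A i j))\<^sup>2) = (cmod (A i0 j))\<^sup>2"
        by (rule infsum_single_pt) (simp add: A_def)
      then show "(\<Sum>\<^sub>\<infinity>i. (cmod (A i j))\<^sup>2) \<le> 1" by (simp add: A_def)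
    qed
  qed
  have "A \<in> compress C (Arv P (k + m))"
    unfolding compress_def Arv_def
  proof (intro CollectI exI conjI)
    show "A = (\<lambda>i j. proj C i * A i j * proj C j)"
      using c0 cl by (auto simp: A_def proj_def fun_eq_iff i0_def j0_def)
  qed (rule A0)
  with red obtain T where adj: "is_Uadj P k m A T" and TC: "T \<in> ten_model (csupp P C k) (csupp P C m)"
    unfolding reducing_def by blast
  define S :: "'a \<Rightarrow> 'a \<Rightarrow> 'a \<Rightarrow> complex" where
    "S = (\<lambda>i k' j. if i = i0 \<and> k' = k0 \<and> j = j0 then 1 else 0)"
  have S0: "S \<in> ten_model (supp P k) (supp P m)"
    unfolding ten_model_def
  proof (intro CollectI conjI allI impI)
    fix i k' j assume "(i, k') \<notin> supp P k \<or> (k', j) \<notin> supp P m"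
    then show "S i k' j = 0" using a b unfolding S_def supp_def by auto
  next
    fix j
    show "(\<lambda>(i, k'). (cmod (S i k' j))\<^sup>2) summable_on UNIV"
      unfolding summable_on_def by (rule exI, rule has_sum_single_pt[where a="(i0,k0)"]) (auto simp: S_def split: if_splits)
  next
    show "\<exists>M. \<forall>j. (\<Sum>\<^sub>\<infinity>(i, k'). (cmod (S i k' j))\<^sup>2) \<le> M"
    proof (intro exI allI)
      fix j
      have "(\<Sum>\<^sub>\<infinity>(i, k'). (cmod (S i k' j))\<^sup>2) = (\<lambda>(i, k'). (cmod (S i k' j))\<^sup>2) (i0, k0)"
        by (rule infsum_single_pt) (auto simp: S_def split: if_splits)
      then show "(\<Sum>\<^sub>\<infinity>(i, k'). (cmod (S i k' j))\<^sup>2) \<le> 1" by (simp add: S_def)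
    qed
  qed
  with adj have eq: "arv_inner (Umap P k m S) A j0 = ten_inner S T j0"
    unfolding is_Uadj_def by blast
  have "(i0, k0) \<notin> csupp P C k" using nk unfolding csupp_def k0_def by auto
  then have T0: "T i0 k0 j0 = 0" using TC unfolding ten_model_def by blast
  have "ten_inner S T j0 = (\<lambda>(i, k'). cnj (S i k' j0) * T i k' j0) (i0, k0)"
    unfolding ten_inner_def by (rule infsum_single_pt) (auto simp: S_def split: if_splits)
  then have r: "ten_inner S T j0 = 0" using T0 by simp
  have u: "Umap P k m S i0 j0 = complex_of_real (1 / sqrt (matpow P (k + m) i0 j0)) *
      (complex_of_real (sqrt (matpow P k i0 k0)) * complex_of_real (sqrt (matpow P m k0 j0)))"
  proof -
    have "(\<Sum>\<^sub>\<infinity>k'. complex_of_real (sqrt (matpow P k i0 k')) * complex_of_real (sqrt (matpow P m k' j0)) * S i0 k' j0)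
        = complex_of_real (sqrt (matpow P k i0 k0)) * complex_of_real (sqrt (matpow P m k0 j0)) * S i0 k0 j0"
      by (rule infsum_single_pt) (auto simp: S_def split: if_splits)
    then show ?thesis unfolding Umap_def using Q by (simp add: S_def)
  qed
  have "arv_inner (Umap P k m S) A j0 = cnj (Umap P k m S i0 j0) * A i0 j0"
    unfolding arv_inner_def by (rule infsum_single_pt) (auto simp: A_def split: if_splits)
  also have "\<dots> \<noteq> 0" using u a b Q by (simp add: A_def)
  finally show False using eq r by simp
qed

lemma mid_in_C:
  assumes pc: "\<forall>(\<gamma>::nat \<Rightarrow> 'a) l. is_path P \<gamma> l \<and> \<gamma> 0 \<in> C \<and> \<gamma> l \<in> C \<longrightarrow> (\<forall>k\<le>l. \<gamma> k \<in> C)"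
    and i: "i \<in> C" and j: "j \<in> C" and a: "matpow P n i k > 0" and b: "matpow P m k j > 0"
  shows "k \<in> C"
proof -
  obtain g1 where g1: "is_path P g1 n" "g1 0 = i" "g1 n = k" using pos_path[OF a] by blast
  obtain g2 where g2: "is_path P g2 m" "g2 0 = k" "g2 m = j" using pos_path[OF b] by blast
  define g where "g = (\<lambda>t. if t \<le> n then g1 t else g2 (t - n))"
  have "is_path P g (n + m)" unfolding g_def by (rule path_concat) (use g1 g2 in auto)
  moreover have "g 0 = i" "g (n + m) = j" "g n = k" using g1 g2 by (auto simp: g_def)
  ultimately show ?thesis using pc i j by (metis le_add1)
qed

lemma norm_prod_le: "cmod (cnj s * t) \<le> ((cmod s)\<^sup>2 + (cmod t)\<^sup>2) / 2"
proof -
  have "0 \<le> (cmod s - cmod t)\<^sup>2" by simp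
  then show ?thesis by (simp add: norm_mult power2_eq_square algebra_simps)
qed

lemma path_imp_reducing:
  assumes pc: "\<forall>(\<gamma>::nat \<Rightarrow> 'a) l. is_path P \<gamma> l \<and> \<gamma> 0 \<in> C \<and> \<gamma> l \<in> C \<longrightarrow> (\<forall>k\<le>l. \<gamma> k \<in> C)"
  shows "reducing P C"
  unfolding reducing_def
proof (intro allI ballI)
  fix n m A assume "A \<in> compress C (Arv P (n + m))"
  then obtain A0 where A: "A = (\<lambda>i j. proj C i * A0 i j * proj C j)" and A0: "A0 \<in> colmat (supp P (n + m))"
    unfolding compress_def Arv_def by blast
  from A0 obtain M where M: "\<And>j. (\<Sum>\<^sub>\<infinity>i. (cmod (A0 i j))\<^sup>2) \<le> M"
    and A0s: "\<And>j. (\<lambda>i. (cmod (A0 i j))\<^sup>2) summable_on UNIV"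
    unfolding colmat_def by blast
  have Ale: "cmod (A i j) \<le> cmod (A0 i j)" for i j by (simp add: A proj_def norm_mult)
  define fl where "fl = (\<lambda>i j. if matpow P (n + m) i j > 0 then 1 / sqrt (matpow P (n + m) i j) else 0)"
  define w where "w = (\<lambda>i k j. fl i j * sqrt (matpow P n i k) * sqrt (matpow P m k j))"
  define T where "T = (\<lambda>i k j. complex_of_real (w i k j) * A i j)"
  have Tz: "T i k j = 0" if "(i, k) \<notin> csupp P C n \<or> (k, j) \<notin> csupp P C m" for i k j
  proof (rule ccontr)
    assume "T i k j \<noteq> 0"
    then have wa: "w i k j \<noteq> 0" "A i j \<noteq> 0" by (auto simp: T_def)
    then have pa: "matpow P n i k > 0" "matpow P m k j > 0"
      using mp_nn[of n i k] mp_nn[of m k j] by (auto simp: w_def less_le)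
    from wa have ij: "i \<in> C" "j \<in> C" by (auto simp: A proj_def split: if_splits)
    have "k \<in> C" by (rule mid_in_C[OF pc ij pa])
    with pa ij that show False by (auto simp: csupp_def supp_def)
  qed
  have wsq: "((\<lambda>k. (w i k j)\<^sup>2) has_sum (fl i j)\<^sup>2 * matpow P (n + m) i j) UNIV" for i j
  proof -
    have "((\<lambda>k. matpow P n i k * matpow P m k j) has_sum matpow P (n + m) i j) UNIV"
      unfolding CK by (rule has_sum_infsum[OF mp_prod_summable])
    from has_sum_cmult_right[OF this, where c="(fl i j)\<^sup>2"]
    show ?thesis unfolding w_def using mp_nn
      by (simp add: power_mult_distrib real_sqrt_pow2 mult.assoc)
  qed
  have flQ: "(fl i j)\<^sup>2 * matpow P (n + m) i j \<le> 1" for i j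
    using mp_nn[of "n+m" i j] by (auto simp: fl_def power_divide real_sqrt_pow2)
  have flQ0: "0 \<le> (fl i j)\<^sup>2 * matpow P (n + m) i j" for i j using mp_nn by simp
  define g where "g = (\<lambda>j i. (fl i j)\<^sup>2 * matpow P (n + m) i j * (cmod (A i j))\<^sup>2)"
  have gle: "g j i \<le> (cmod (A0 i j))\<^sup>2" for i j
  proof -
    have "g j i \<le> 1 * (cmod (A i j))\<^sup>2" unfolding g_def
      by (rule mult_right_mono[OF flQ]) simp
    also have "\<dots> \<le> (cmod (A0 i j))\<^sup>2" using Ale[of i j] by (simp add: power_mono)
    finally show ?thesis .
  qed
  have gnn: "0 \<le> g j i" for i j unfolding g_def using flQ0 by simp
  have gs: "g j summable_on UNIV" for j
    by (rule summable_on_comparison_test[OF A0s[of j]]) (use gle gnn in auto)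
  have Tinner: "((\<lambda>k. (\<lambda>(i,k). (cmod (T i k j))\<^sup>2) (i, k)) has_sum g j i) UNIV" for i j
  proof -
    from has_sum_cmult_left[OF wsq, where c="(cmod (A i j))\<^sup>2"]
    show ?thesis by (simp add: T_def g_def norm_mult power_mult_distrib)
  qed
  have Tsum: "((\<lambda>(i,k). (cmod (T i k j))\<^sup>2) has_sum (\<Sum>\<^sub>\<infinity>i. g j i)) UNIV" for j
  proof -
    have sm: "(\<lambda>(i,k). (cmod (T i k j))\<^sup>2) summable_on Sigma UNIV (\<lambda>_. UNIV)"
      by (rule summable_on_SigmaI[OF Tinner gs]) auto
    have "((\<lambda>(i,k). (cmod (T i k j))\<^sup>2) has_sum (\<Sum>\<^sub>\<infinity>i. g j i)) (Sigma UNIV (\<lambda>_. UNIV))"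
      by (rule has_sum_SigmaI[OF Tinner has_sum_infsum[OF gs] sm])
    then show ?thesis by simp
  qed
  have Tbound: "(\<Sum>\<^sub>\<infinity>(i,k). (cmod (T i k j))\<^sup>2) \<le> M" for j
  proof -
    have "(\<Sum>\<^sub>\<infinity>(i,k). (cmod (T i k j))\<^sup>2) = (\<Sum>\<^sub>\<infinity>i. g j i)" using Tsum infsumI by blast
    also have "\<dots> \<le> (\<Sum>\<^sub>\<infinity>i. (cmod (A0 i j))\<^sup>2)"
      by (rule infsum_mono[OF gs A0s gle])
    also have "\<dots> \<le> M" by (rule M)
    finally show ?thesis .
  qed
  have Tsm: "(\<lambda>(i,k). (cmod (T i k j))\<^sup>2) summable_on UNIV" for j
    using Tsum unfolding summable_on_def by blast
  have TC: "T \<in> ten_model (csupp P C n) (csupp P C m)"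
    unfolding ten_model_def using Tz Tsm Tbound by blast
  have TS: "T \<in> ten_model (supp P n) (supp P m)"
    unfolding ten_model_def using Tz Tsm Tbound by (auto simp: csupp_def)
  have adj: "arv_inner (Umap P n m S) A j = ten_inner S T j"
    if S: "S \<in> ten_model (supp P n) (supp P m)" for S j
  proof -
    define F where "F = (\<lambda>(i,k). cnj (S i k j) * T i k j)"
    have Ss: "(\<lambda>(i,k). (cmod (S i k j))\<^sup>2) summable_on UNIV" using S unfolding ten_model_def by blast
    have Fs: "F summable_on UNIV"
    proof (rule abs_summable_summable)
      define h where "h = (\<lambda>x. ((\<lambda>(i,k). (cmod (S i k j))\<^sup>2) x + (\<lambda>(i,k). (cmod (T i k j))\<^sup>2) x) * (1/2))"
      have hs: "h summable_on UNIV"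
        unfolding h_def by (rule summable_on_cmult_left[OF summable_on_add[OF Ss Tsm[of j]]])
      have nb: "norm (F x) \<le> h x" for x
        using norm_prod_le by (auto simp: F_def h_def split: prod.splits)
      show "(\<lambda>x. norm (F x)) summable_on UNIV"
        by (rule Infinite_Sum.abs_summable_on_comparison_test'[OF hs nb])
    qed
    have row: "cnj (Umap P n m S i j) * A i j = (\<Sum>\<^sub>\<infinity>k. F (i, k))" for i
    proof -
      have cf: "(if matpow P (n + m) i j > 0 then complex_of_real (1 / sqrt (matpow P (n + m) i j)) else 0)
          = complex_of_real (fl i j)" by (simp add: fl_def)
      have "cnj (Umap P n m S i j) * A i j =
          (\<Sum>\<^sub>\<infinity>k. cnj (complex_of_real (sqrt (matpow P n i k)) * complex_of_real (sqrt (matpow P m k j)) * S i k j))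
          * (complex_of_real (fl i j) * A i j)"
        unfolding Umap_def cf by (simp add: infsum_cnj[symmetric] del: infsum_cnj)
      also have "\<dots> = (\<Sum>\<^sub>\<infinity>k. cnj (complex_of_real (sqrt (matpow P n i k)) * complex_of_real (sqrt (matpow P m k j)) * S i k j)
          * (complex_of_real (fl i j) * A i j))"
        by (rule infsum_cmult_left'[symmetric])
      also have "\<dots> = (\<Sum>\<^sub>\<infinity>k. F (i, k))"
        by (rule infsum_cong) (simp add: F_def T_def w_def mult_ac)
      finally show ?thesis .
    qed
    have "arv_inner (Umap P n m S) A j = (\<Sum>\<^sub>\<infinity>i. \<Sum>\<^sub>\<infinity>k. F (i, k))"
      unfolding arv_inner_def using row by simp
    also have "\<dots> = infsum F (Sigma UNIV (\<lambda>_. UNIV))"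
      by (rule infsum_Sigma_banach) (use Fs in simp)
    also have "\<dots> = ten_inner S T j" by (simp add: ten_inner_def F_def)
    finally show ?thesis .
  qed
  show "\<exists>T. is_Uadj P n m A T \<and> T \<in> ten_model (csupp P C n) (csupp P C m)"
    using TS TC adj unfolding is_Uadj_def by blast
qed

end

theorem mainTheorem13:
  fixes P :: "'a::countable \<Rightarrow> 'a \<Rightarrow> real" and C :: "'a set"
  assumes "stochastic P"
  shows "reducing P C \<longleftrightarrow>
    (\<forall>(\<gamma>::nat \<Rightarrow> 'a) l. is_path P \<gamma> l \<and> \<gamma> 0 \<in> C \<and> \<gamma> l \<in> C \<longrightarrow> (\<forall>k\<le>l. \<gamma> k \<in> C))"
  using reducing_imp_path[OF assms] path_imp_reducing[OF assms] by blast

end
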